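(* Let $X\in\mathbb R^{m\times N_0}$ be fixed and let $W^{(i)}\in\mathbb R^{N_{i-1}\times N_i}$, $i=1,\dots,L$, be independent matrices with i.i.d. $\mathcal N(0,1)$ entries, with all $N_k\ge 3$. Let $X^{(0)}=X$, $X^{(i)}=\rho(X^{(i-1)}W^{(i)})$ with $\rho(x)=\max\{0,x\}$ entrywise. (a) For $p\in\mathbb N$, $p\ge2$, and $1\le i\le L$, with probability at least $1-\sum_{k=1}^i 2N_k/N_{k-1}^p$, $$\max_{1\le j\le N_i}\|X^{(i)}_j\|_2\le(4p)^{i/2}\Bigl(\prod_{k=1}^{i-1}N_k\Bigr)^{1/2}\Bigl(\prod_{k=0}^{i-1}\log N_k\Bigr)^{1/2}\|X\|_F.$$ (b) For $1\le i\le L$, $\displaystyle \mathbb E\|X^{(i)}\|_F^2\ge\frac{\|X\|_F^2}{(2\pi)^i}\prod_{k=1}^i N_k$, where the expectation is over the weights.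
   Context: $X^{(i)}_j$ denotes the $j$-th column of $X^{(i)}$. *)

theory Defs
  imports "HOL-Probability.Probability"
begin

text \<open>Matrices are functions nat => nat => real, entry (r,c); sizes are carried explicitly.
  The weights of all layers are one point w of the index set below: w (i,a,b) is entry (a,b)
  of W^(i), with a < N (i-1), b < N i.\<close>

definition relu :: "real \<Rightarrow> real" where
  "relu x = max 0 x"

definition weight_index :: "nat \<Rightarrow> (nat \<Rightarrow> nat) \<Rightarrow> (nat \<times> nat \<times> nat) set" where
  "weight_index L N = {(i, a, b). 1 \<le> i \<and> i \<le> L \<and> a < N (i - 1) \<and> b < N i}"

definition weight_space :: "nat \<Rightarrow> (nat \<Rightarrow> nat) \<Rightarrow> ((nat \<times> nat \<times> nat) \<Rightarrow> real) measure" where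
  "weight_space L N = PiM (weight_index L N) (\<lambda>_. density lborel std_normal_density)"

fun layer :: "(nat \<Rightarrow> nat) \<Rightarrow> (nat \<Rightarrow> nat \<Rightarrow> real) \<Rightarrow> ((nat \<times> nat \<times> nat) \<Rightarrow> real)
    \<Rightarrow> nat \<Rightarrow> nat \<Rightarrow> nat \<Rightarrow> real" where
  "layer N X w 0 = X"
| "layer N X w (Suc i) = (\<lambda>r c. relu (\<Sum>k<N i. layer N X w i r k * w (Suc i, k, c)))"

definition frob_norm :: "nat \<Rightarrow> nat \<Rightarrow> (nat \<Rightarrow> nat \<Rightarrow> real) \<Rightarrow> real" where
  "frob_norm m n A = sqrt (\<Sum>r<m. \<Sum>c<n. (A r c)\<^sup>2)"

definition col_norm :: "nat \<Rightarrow> (nat \<Rightarrow> nat \<Rightarrow> real) \<Rightarrow> nat \<Rightarrow> real" where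
  "col_norm m A j = sqrt (\<Sum>r<m. (A r j)\<^sup>2)"

end

theory Submission
  imports Defs
begin


abbreviation GN :: "real measure" where "GN \<equiv> density lborel std_normal_density"

lemma prob_GN: "prob_space GN" by (rule prob_space_normal_density) simp

lemma pps: "product_prob_space (\<lambda>_::nat\<times>nat\<times>nat. GN)"
  by (rule product_prob_spaceI) (rule prob_GN)

lemma psf: "product_sigma_finite (\<lambda>_::nat\<times>nat\<times>nat. GN)"
  using pps by (simp add: product_prob_space_def)

lemma prob_Om: "prob_space (PiM J (\<lambda>_::nat\<times>nat\<times>nat. GN))"
  by (intro prob_space_PiM prob_GN)

lemma sets_GN[simp]: "sets GN = sets borel" by simp
lemma space_GN[simp]: "space GN = UNIV" by simp

lemma coord_dist:
  assumes "t \<in> J"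
  shows "distributed (PiM J (\<lambda>_::nat\<times>nat\<times>nat. GN)) lborel (\<lambda>w. w t) std_normal_density"
proof -
  have "distr (PiM J (\<lambda>_. GN)) GN (\<lambda>w. w t) = GN"
    by (rule distr_PiM_component) (auto intro: prob_GN assms)
  moreover have "distr (PiM J (\<lambda>_. GN)) lborel (\<lambda>w. w t) = distr (PiM J (\<lambda>_. GN)) GN (\<lambda>w. w t)"
    by (rule distr_cong) auto
  moreover have "(\<lambda>w. w t) \<in> measurable (PiM J (\<lambda>_. GN)) lborel"
  proof -
    have "(\<lambda>w. w t) \<in> measurable (PiM J (\<lambda>_. GN)) GN"
      using assms by (rule measurable_component_singleton)
    then show ?thesis by (simp cong: measurable_cong_sets)
  qed
  ultimately show ?thesis unfolding distributed_def by auto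
qed

lemma coord_indep:
  assumes "finite J" "J \<noteq> {}"
  shows "prob_space.indep_vars (PiM J (\<lambda>_::nat\<times>nat\<times>nat. GN)) (\<lambda>_. borel) (\<lambda>t w. w t) J"
proof -
  interpret P: prob_space "PiM J (\<lambda>_::nat\<times>nat\<times>nat. GN)" by (rule prob_Om)
  have rv: "(\<lambda>w. w t) \<in> measurable (PiM J (\<lambda>_. GN)) borel" if "t \<in> J" for t
  proof -
    have "(\<lambda>w. w t) \<in> measurable (PiM J (\<lambda>_. GN)) GN"
      using that by (rule measurable_component_singleton)
    then show ?thesis by (simp cong: measurable_cong_sets)
  qed
  have r1: "(\<Pi>\<^sub>M i\<in>J. distr (PiM J (\<lambda>_. GN)) borel (\<lambda>w. w i)) = PiM J (\<lambda>_. GN)"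
  proof (rule PiM_cong)
    fix i assume "i \<in> J"
    have "distr (PiM J (\<lambda>_. GN)) borel (\<lambda>w. w i) = distr (PiM J (\<lambda>_. GN)) GN (\<lambda>w. w i)"
      by (rule distr_cong) auto
    also have "\<dots> = GN" by (rule distr_PiM_component) (auto intro: prob_GN \<open>i \<in> J\<close>)
    finally show "distr (PiM J (\<lambda>_. GN)) borel (\<lambda>w. w i) = GN" .
  qed simp
  have r2: "distr (PiM J (\<lambda>_. GN)) (\<Pi>\<^sub>M i\<in>J. borel) (\<lambda>x. \<lambda>i\<in>J. x i) = PiM J (\<lambda>_. GN)"
  proof -
    have "distr (PiM J (\<lambda>_. GN)) (\<Pi>\<^sub>M i\<in>J. borel) (\<lambda>x. \<lambda>i\<in>J. x i)
        = distr (PiM J (\<lambda>_. GN)) (PiM J (\<lambda>_. GN)) (\<lambda>x. x)"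
      by (rule distr_cong) (auto intro!: sets_PiM_cong simp: space_PiM PiE_def extensional_restrict)
    also have "\<dots> = PiM J (\<lambda>_. GN)" by (rule distr_id)
    finally show ?thesis .
  qed
  show ?thesis
    using P.indep_vars_iff_distr_eq_PiM'[where I=J and M'="\<lambda>_. borel" and X="\<lambda>t w. w t"] assms rv r1 r2 by simp
qed

lemma lin_normal:
  assumes J: "finite J" and KJ: "K \<subseteq> J" and pos: "0 < (\<Sum>t\<in>K. (a t)\<^sup>2)"
  shows "distributed (PiM J (\<lambda>_::nat\<times>nat\<times>nat. GN)) lborel (\<lambda>w. \<Sum>t\<in>K. a t * w t)
           (normal_density 0 (sqrt (\<Sum>t\<in>K. (a t)\<^sup>2)))"
proof -
  interpret P: prob_space "PiM J (\<lambda>_::nat\<times>nat\<times>nat. GN)" by (rule prob_Om)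
  define K' where "K' = {t\<in>K. a t \<noteq> 0}"
  have finK: "finite K" using J KJ finite_subset by auto
  have fin': "finite K'" using finK by (simp add: K'_def)
  have s1: "(\<Sum>t\<in>K. (a t)\<^sup>2) = (\<Sum>t\<in>K'. (a t)\<^sup>2)"
    by (rule sum.mono_neutral_right) (auto simp: K'_def finK)
  have s2: "(\<lambda>w. \<Sum>t\<in>K. a t * w t) = (\<lambda>w. \<Sum>t\<in>K'. a t * w t)"
    by (rule ext, rule sum.mono_neutral_right) (auto simp: K'_def finK)
  have ne: "K' \<noteq> {}" using pos s1 by auto
  have K'J: "K' \<subseteq> J" using KJ by (auto simp: K'_def)
  have Jne: "J \<noteq> {}" using ne K'J by auto
  have ind0: "P.indep_vars (\<lambda>_. borel) (\<lambda>t w. w t) K'"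
    using P.indep_vars_subset[OF coord_indep[OF J Jne] K'J] .
  have ind: "P.indep_vars (\<lambda>_. borel) (\<lambda>t w. a t * w t) K'"
    using P.indep_vars_compose2[OF ind0, of "\<lambda>t x. a t * x" "\<lambda>_. borel"] by simp
  have nd: "distributed (PiM J (\<lambda>_. GN)) lborel (\<lambda>w. a t * w t) (normal_density 0 \<bar>a t\<bar>)"
    if "t \<in> K'" for t
  proof -
    have "t \<in> J" "a t \<noteq> 0" using that K'J by (auto simp: K'_def)
    from P.normal_density_affine[OF coord_dist[OF \<open>t \<in> J\<close>], of "a t" 0] \<open>a t \<noteq> 0\<close>
    show ?thesis by simp
  qed
  have pos': "\<And>t. t \<in> K' \<Longrightarrow> 0 < \<bar>a t\<bar>" by (auto simp: K'_def)
  from P.sum_indep_normal[OF fin' ne ind pos' nd]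
  show ?thesis by (simp add: s1 s2)
qed



lemma relu_nonneg[simp]: "0 \<le> relu x" by (simp add: relu_def)
lemma relu_le_abs: "relu x \<le> \<bar>x\<bar>" by (simp add: relu_def)
lemma relu_sq_le: "(relu x)\<^sup>2 \<le> x\<^sup>2"
  by (metis abs_le_square_iff abs_of_nonneg relu_le_abs relu_nonneg)
lemma relu_sq_sum: "(relu x)\<^sup>2 + (relu (-x))\<^sup>2 = x\<^sup>2"
  by (simp add: relu_def max_def power2_eq_square)
lemma borel_relu[measurable]: "relu \<in> borel_measurable borel"
  unfolding relu_def[abs_def] by measurable

lemma nd_nn_integral_1:
  assumes "0 < \<sigma>"
  shows "(\<integral>\<^sup>+x. ennreal (normal_density \<mu> \<sigma> x) \<partial>lborel) = 1"
  by (subst nn_integral_eq_integral) (auto simp: assms)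

lemma nd_sym: "normal_density 0 \<sigma> (- x) = normal_density 0 \<sigma> x"
  by (simp add: normal_density_def)

lemma relu_moment:
  assumes s: "0 < \<sigma>"
  shows "(\<integral>\<^sup>+x. ennreal (normal_density 0 \<sigma> x) * ennreal ((relu x)\<^sup>2) \<partial>lborel) = ennreal (\<sigma>\<^sup>2 / 2)"
proof -
  define A where "A = (\<integral>\<^sup>+x. ennreal (normal_density 0 \<sigma> x * (relu x)\<^sup>2) \<partial>lborel)"
  have A2: "A = (\<integral>\<^sup>+x. ennreal (normal_density 0 \<sigma> x * (relu (-x))\<^sup>2) \<partial>lborel)"
    unfolding A_def
    by (subst nn_integral_real_affine[where c="-1" and t=0]) (auto simp: nd_sym)
  have mom: "has_bochner_integral lborel (\<lambda>x. normal_density 0 \<sigma> x * x\<^sup>2) (\<sigma>\<^sup>2)"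
    using normal_moment_even[where k=1 and \<mu>=0 and \<sigma>=\<sigma>] s by simp
  have "A + A = (\<integral>\<^sup>+x. ennreal (normal_density 0 \<sigma> x * (relu x)\<^sup>2) + ennreal (normal_density 0 \<sigma> x * (relu (-x))\<^sup>2) \<partial>lborel)"
    by (subst nn_integral_add) (auto simp: A_def A2[symmetric])
  also have "\<dots> = (\<integral>\<^sup>+x. ennreal (normal_density 0 \<sigma> x * x\<^sup>2) \<partial>lborel)"
    by (rule nn_integral_cong)
       (simp add: ennreal_plus[symmetric] distrib_left[symmetric] relu_sq_sum del: ennreal_plus)
  also have "\<dots> = ennreal (\<sigma>\<^sup>2)"
    using mom by (subst nn_integral_eq_integral) (auto simp: has_bochner_integral_iff)
  finally have AA: "A + A = ennreal (\<sigma>\<^sup>2)" .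
  then have "A \<noteq> \<top>" by auto
  then obtain a where a: "A = ennreal a" "0 \<le> a" by (cases A) auto
  with AA have "ennreal (a + a) = ennreal (\<sigma>\<^sup>2)" by (simp add: ennreal_plus[symmetric] del: ennreal_plus)
  then have "a + a = \<sigma>\<^sup>2" using a by (subst (asm) ennreal_inj) auto
  then have "A = ennreal (\<sigma>\<^sup>2 / 2)" using a by simp
  then show ?thesis unfolding A_def by (simp add: ennreal_mult'[symmetric])
qed

lemma exp_moment:
  assumes s: "0 < \<sigma>"
  shows "(\<integral>\<^sup>+x. ennreal (normal_density 0 \<sigma> x) * ennreal (exp (x\<^sup>2 / (4 * \<sigma>\<^sup>2))) \<partial>lborel) = ennreal (sqrt 2)"
proof -
  have pt: "normal_density 0 \<sigma> x * exp (x\<^sup>2 / (4 * \<sigma>\<^sup>2)) = sqrt 2 * normal_density 0 (sqrt 2 * \<sigma>) x" for x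
  proof -
    have "exp (- x\<^sup>2 / (2 * \<sigma>\<^sup>2)) * exp (x\<^sup>2 / (4 * \<sigma>\<^sup>2)) = exp (- x\<^sup>2 / (2 * (sqrt 2 * \<sigma>)\<^sup>2))"
    proof -
      have "- x\<^sup>2 / (2 * \<sigma>\<^sup>2) + x\<^sup>2 / (4 * \<sigma>\<^sup>2) = - x\<^sup>2 / (2 * (sqrt 2 * \<sigma>)\<^sup>2)"
        using s by (simp add: power_mult_distrib field_simps)
      then show ?thesis by (simp add: mult_exp_exp)
    qed
    moreover have "1 / sqrt (2 * pi * \<sigma>\<^sup>2) = sqrt 2 * (1 / sqrt (2 * pi * (sqrt 2 * \<sigma>)\<^sup>2))"
      using s by (simp add: power_mult_distrib real_sqrt_mult field_simps)
    ultimately show ?thesis unfolding normal_density_def by (simp add: mult_ac)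
  qed
  have "(\<integral>\<^sup>+x. ennreal (normal_density 0 \<sigma> x) * ennreal (exp (x\<^sup>2 / (4 * \<sigma>\<^sup>2))) \<partial>lborel)
      = (\<integral>\<^sup>+x. ennreal (sqrt 2) * ennreal (normal_density 0 (sqrt 2 * \<sigma>) x) \<partial>lborel)"
    by (rule nn_integral_cong) (simp add: ennreal_mult'[symmetric] pt)
  also have "\<dots> = ennreal (sqrt 2)"
    using s by (subst nn_integral_cmult) (auto simp: nd_nn_integral_1)
  finally show ?thesis .
qed



definition zz :: "(nat \<Rightarrow> nat \<Rightarrow> real) \<Rightarrow> nat \<Rightarrow> nat \<Rightarrow> nat \<Rightarrow> nat \<Rightarrow> (nat\<times>nat\<times>nat \<Rightarrow> real) \<Rightarrow> real" where
  "zz Y n j r c w = (\<Sum>k<n. Y r k * w (j, k, c))"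

definition rsq :: "(nat \<Rightarrow> nat \<Rightarrow> real) \<Rightarrow> nat \<Rightarrow> nat \<Rightarrow> real" where
  "rsq Y n r = (\<Sum>k<n. (Y r k)\<^sup>2)"

lemma rsq_nonneg[simp]: "0 \<le> rsq Y n r" by (simp add: rsq_def sum_nonneg)

lemma comp_meas: "t \<in> J \<Longrightarrow> (\<lambda>w. w t) \<in> borel_measurable (PiM J (\<lambda>_::nat\<times>nat\<times>nat. GN))"
proof -
  assume "t \<in> J"
  then have "(\<lambda>w. w t) \<in> measurable (PiM J (\<lambda>_. GN)) GN" by (rule measurable_component_singleton)
  then show ?thesis by (simp cong: measurable_cong_sets)
qed

lemma zz_meas:
  assumes "\<And>k. k < n \<Longrightarrow> (j, k, c) \<in> J"
  shows "zz Y n j r c \<in> borel_measurable (PiM J (\<lambda>_::nat\<times>nat\<times>nat. GN))"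
  unfolding zz_def[abs_def]
  by (intro borel_measurable_sum borel_measurable_times borel_measurable_const comp_meas assms) auto

lemma zz_zero: "rsq Y n r = 0 \<Longrightarrow> zz Y n j r c w = 0"
  unfolding rsq_def zz_def by (subst (asm) sum_nonneg_eq_0_iff) auto

lemma zz_dist:
  assumes J: "finite J" and sub: "\<And>k. k < n \<Longrightarrow> (j, k, c) \<in> J" and pos: "0 < rsq Y n r"
  shows "distributed (PiM J (\<lambda>_::nat\<times>nat\<times>nat. GN)) lborel (zz Y n j r c)
           (normal_density 0 (sqrt (rsq Y n r)))"
proof -
  define K where "K = (\<lambda>k. (j, k, c)) ` {..<n}"
  define a where "a = (\<lambda>t::nat\<times>nat\<times>nat. Y r (fst (snd t)))"
  have inj: "inj_on (\<lambda>k. (j, k, c)) {..<n}" by (auto simp: inj_on_def)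
  have e1: "(\<Sum>t\<in>K. (a t)\<^sup>2) = rsq Y n r"
    unfolding K_def rsq_def by (subst sum.reindex[OF inj]) (simp add: a_def)
  have e2: "zz Y n j r c = (\<lambda>w. \<Sum>t\<in>K. a t * w t)"
    unfolding K_def zz_def[abs_def] by (rule ext, subst sum.reindex[OF inj]) (simp add: a_def)
  have "K \<subseteq> J" using sub by (auto simp: K_def)
  from lin_normal[OF J this, of a] pos e1 e2 show ?thesis by simp
qed

lemma zz_relu_int:
  assumes J: "finite J" and sub: "\<And>k. k < n \<Longrightarrow> (j, k, c) \<in> J"
  shows "(\<integral>\<^sup>+w. ennreal ((relu (zz Y n j r c w))\<^sup>2) \<partial>PiM J (\<lambda>_::nat\<times>nat\<times>nat. GN))
         = ennreal (rsq Y n r / 2)"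
proof (cases "rsq Y n r = 0")
  case True
  then show ?thesis by (simp add: zz_zero relu_def)
next
  case False
  then have pos: "0 < rsq Y n r" using rsq_nonneg[of Y n r] by linarith
  have "(\<integral>\<^sup>+w. ennreal ((relu (zz Y n j r c w))\<^sup>2) \<partial>PiM J (\<lambda>_. GN))
      = (\<integral>\<^sup>+x. ennreal (normal_density 0 (sqrt (rsq Y n r)) x) * ennreal ((relu x)\<^sup>2) \<partial>lborel)"
    by (rule distributed_nn_integral[OF zz_dist[OF J sub pos], symmetric]) measurable
  also have "\<dots> = ennreal (rsq Y n r / 2)"
    using pos by (subst relu_moment) auto
  finally show ?thesis .
qed

lemma zz_exp_int:
  assumes J: "finite J" and sub: "\<And>k. k < n \<Longrightarrow> (j, k, c) \<in> J" and pos: "0 < rsq Y n r"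
  shows "(\<integral>\<^sup>+w. ennreal (exp ((zz Y n j r c w)\<^sup>2 / (4 * rsq Y n r))) \<partial>PiM J (\<lambda>_::nat\<times>nat\<times>nat. GN))
         = ennreal (sqrt 2)"
proof -
  have "(\<integral>\<^sup>+w. ennreal (exp ((zz Y n j r c w)\<^sup>2 / (4 * rsq Y n r))) \<partial>PiM J (\<lambda>_. GN))
      = (\<integral>\<^sup>+x. ennreal (normal_density 0 (sqrt (rsq Y n r)) x) * ennreal (exp (x\<^sup>2 / (4 * (sqrt (rsq Y n r))\<^sup>2))) \<partial>lborel)"
    using pos by (subst distributed_nn_integral[OF zz_dist[OF J sub pos]]) (auto, measurable)
  also have "\<dots> = ennreal (sqrt 2)"
    using pos by (subst exp_moment) auto
  finally show ?thesis .
qed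



lemma jensen_tail:
  fixes s x :: "nat \<Rightarrow> real"
  assumes R: "finite R" "R \<noteq> {}" and s: "\<And>r. r \<in> R \<Longrightarrow> 0 < s r"
    and lt: "t * (\<Sum>r\<in>R. s r) \<le> (\<Sum>r\<in>R. (x r)\<^sup>2)"
  shows "1 \<le> exp (- t / 4) * (\<Sum>r\<in>R. (s r / (\<Sum>r\<in>R. s r)) * exp ((x r)\<^sup>2 / (4 * s r)))"
proof -
  define F where "F = (\<Sum>r\<in>R. s r)"
  have F: "0 < F" unfolding F_def using R s by (intro sum_pos) auto
  have w1: "(\<Sum>r\<in>R. s r / F) = 1" using F by (simp add: F_def sum_divide_distrib[symmetric])
  have "exp (\<Sum>r\<in>R. (s r / F) *\<^sub>R ((x r)\<^sup>2 / (4 * s r))) \<le> (\<Sum>r\<in>R. (s r / F) * exp ((x r)\<^sup>2 / (4 * s r)))"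
    using convex_on_sum[OF R convex_on_exp[of 1] w1, of "\<lambda>r. (x r)\<^sup>2 / (4 * s r)"] s F
    by (simp add: less_imp_le)
  moreover have "(\<Sum>r\<in>R. (s r / F) *\<^sub>R ((x r)\<^sup>2 / (4 * s r))) = (\<Sum>r\<in>R. (x r)\<^sup>2) / (4 * F)"
    by (simp add: sum_divide_distrib) (rule sum.cong, use s F in force, use s F in fastforce)
  ultimately have A: "exp ((\<Sum>r\<in>R. (x r)\<^sup>2) / (4 * F)) \<le> (\<Sum>r\<in>R. (s r / F) * exp ((x r)\<^sup>2 / (4 * s r)))"
    by simp
  have "t / 4 \<le> (\<Sum>r\<in>R. (x r)\<^sup>2) / (4 * F)" using lt F by (simp add: F_def[symmetric] field_simps)
  then have "1 \<le> exp (- t / 4) * exp ((\<Sum>r\<in>R. (x r)\<^sup>2) / (4 * F))"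
    by (simp add: mult_exp_exp)
  also have "\<dots> \<le> exp (- t / 4) * (\<Sum>r\<in>R. (s r / F) * exp ((x r)\<^sup>2 / (4 * s r)))"
    using A by simp
  finally show ?thesis by (simp add: F_def)
qed



lemma layer_sum_int:
  assumes J: "finite J" and sub: "\<And>k c. k < n \<Longrightarrow> c < n' \<Longrightarrow> (j, k, c) \<in> J"
  shows "(\<integral>\<^sup>+w. ennreal (\<Sum>r<m. \<Sum>c<n'. (relu (zz Y n j r c w))\<^sup>2) \<partial>PiM J (\<lambda>_::nat\<times>nat\<times>nat. GN))
         = ennreal (real n' / 2 * (\<Sum>r<m. rsq Y n r))"
proof -
  have meas: "(\<lambda>w. ennreal ((relu (zz Y n j r c w))\<^sup>2)) \<in> borel_measurable (PiM J (\<lambda>_. GN))"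
    if "c < n'" for r c
    using zz_meas[of n j c J Y r] sub that by measurable
  have "(\<integral>\<^sup>+w. ennreal (\<Sum>r<m. \<Sum>c<n'. (relu (zz Y n j r c w))\<^sup>2) \<partial>PiM J (\<lambda>_. GN))
     = (\<integral>\<^sup>+w. (\<Sum>r<m. \<Sum>c<n'. ennreal ((relu (zz Y n j r c w))\<^sup>2)) \<partial>PiM J (\<lambda>_. GN))"
    by (rule nn_integral_cong) (simp add: sum_ennreal sum_nonneg)
  also have "\<dots> = (\<Sum>r<m. \<Sum>c<n'. (\<integral>\<^sup>+w. ennreal ((relu (zz Y n j r c w))\<^sup>2) \<partial>PiM J (\<lambda>_. GN)))"
  proof -
    have m2: "(\<lambda>w. \<Sum>c<n'. ennreal ((relu (zz Y n j r c w))\<^sup>2)) \<in> borel_measurable (PiM J (\<lambda>_. GN))" for r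
      using meas by (intro borel_measurable_sum) auto
    have "(\<integral>\<^sup>+w. (\<Sum>r<m. \<Sum>c<n'. ennreal ((relu (zz Y n j r c w))\<^sup>2)) \<partial>PiM J (\<lambda>_. GN))
       = (\<Sum>r<m. (\<integral>\<^sup>+w. (\<Sum>c<n'. ennreal ((relu (zz Y n j r c w))\<^sup>2)) \<partial>PiM J (\<lambda>_. GN)))"
      by (rule nn_integral_sum) (use m2 in auto)
    also have "\<dots> = (\<Sum>r<m. \<Sum>c<n'. (\<integral>\<^sup>+w. ennreal ((relu (zz Y n j r c w))\<^sup>2) \<partial>PiM J (\<lambda>_. GN)))"
      by (rule sum.cong[OF refl], rule nn_integral_sum) (use meas in auto)
    finally show ?thesis .
  qed
  also have "\<dots> = (\<Sum>r<m. \<Sum>c<n'. ennreal (rsq Y n r / 2))"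
    using zz_relu_int[OF J] sub by simp
  also have "\<dots> = ennreal (real n' / 2 * (\<Sum>r<m. rsq Y n r))"
  proof -
    have "(\<Sum>r<m. \<Sum>c<n'. ennreal (rsq Y n r / 2)) = (\<Sum>r<m. ennreal (\<Sum>c<n'. rsq Y n r / 2))"
      by (rule sum.cong[OF refl], rule sum_ennreal) simp
    also have "\<dots> = ennreal (\<Sum>r<m. \<Sum>c<n'. rsq Y n r / 2)"
      by (rule sum_ennreal) (simp add: sum_nonneg)
    finally show ?thesis by (simp add: sum_distrib_left)
  qed
  finally show ?thesis .
qed



lemma col_tail:
  assumes J: "finite J" and sub: "\<And>k. k < n \<Longrightarrow> (j, k, c) \<in> J"
  shows "emeasure (PiM J (\<lambda>_::nat\<times>nat\<times>nat. GN))
           {w \<in> space (PiM J (\<lambda>_. GN)). t * (\<Sum>r<m. rsq Y n r) < (\<Sum>r<m. (relu (zz Y n j r c w))\<^sup>2)}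
         \<le> ennreal (sqrt 2 * exp (- t / 4))"
proof (cases "(\<Sum>r<m. rsq Y n r) = 0")
  case True
  then have "\<And>r. r < m \<Longrightarrow> rsq Y n r = 0" by (subst (asm) sum_nonneg_eq_0_iff) auto
  then have E: "{w \<in> space (PiM J (\<lambda>_. GN)). t * (\<Sum>r<m. rsq Y n r) < (\<Sum>r<m. (relu (zz Y n j r c w))\<^sup>2)} = {}"
    using True by (auto simp: zz_zero relu_def)
  show ?thesis unfolding E by simp
next
  case False
  define M where "M = PiM J (\<lambda>_::nat\<times>nat\<times>nat. GN)"
  define F where "F = (\<Sum>r<m. rsq Y n r)"
  define R where "R = {r\<in>{..<m}. 0 < rsq Y n r}"
  have Fpos: "0 < F" using False unfolding F_def by (metis less_eq_real_def rsq_nonneg sum_nonneg)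
  have finR: "finite R" by (simp add: R_def)
  have FR: "F = (\<Sum>r\<in>R. rsq Y n r)"
    unfolding F_def R_def
    by (rule sum.mono_neutral_right) (auto simp: less_le)
  have Rne: "R \<noteq> {}" using Fpos FR by auto
  have zmeas: "zz Y n j r c \<in> borel_measurable M" for r
    unfolding M_def using zz_meas[of n j c J Y r] sub by auto
  define A where "A = {w \<in> space M. t * F < (\<Sum>r<m. (relu (zz Y n j r c w))\<^sup>2)}"
  have Ameas: "A \<in> sets M" unfolding A_def using zmeas by measurable
  define g where "g = (\<lambda>w. exp (- t / 4) * (\<Sum>r\<in>R. (rsq Y n r / F) * exp ((zz Y n j r c w)\<^sup>2 / (4 * rsq Y n r))))"
  have pt: "indicator A w \<le> ennreal (g w)" if "w \<in> space M" for w
  proof (cases "w \<in> A")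
    case True
    then have "t * F < (\<Sum>r<m. (relu (zz Y n j r c w))\<^sup>2)" by (simp add: A_def)
    also have "\<dots> \<le> (\<Sum>r<m. (zz Y n j r c w)\<^sup>2)" by (intro sum_mono relu_sq_le)
    also have "\<dots> = (\<Sum>r\<in>R. (zz Y n j r c w)\<^sup>2)"
      unfolding R_def
      by (rule sum.mono_neutral_right) (auto simp: less_le zz_zero)
    finally have "t * (\<Sum>r\<in>R. rsq Y n r) \<le> (\<Sum>r\<in>R. (zz Y n j r c w)\<^sup>2)" by (simp add: FR)
    from jensen_tail[OF finR Rne _ this] have "1 \<le> g w"
      unfolding g_def FR by (auto simp: R_def)
    then show ?thesis using True by simp
  next
    case False
    then show ?thesis by simp
  qed
  have "emeasure M A = (\<integral>\<^sup>+w. indicator A w \<partial>M)" using Ameas by simp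
  also have "\<dots> \<le> (\<integral>\<^sup>+w. ennreal (g w) \<partial>M)"
    by (rule nn_integral_mono) (use pt in auto)
  also have "\<dots> = (\<integral>\<^sup>+w. ennreal (exp (- t / 4)) * (\<Sum>r\<in>R. ennreal (rsq Y n r / F) * ennreal (exp ((zz Y n j r c w)\<^sup>2 / (4 * rsq Y n r)))) \<partial>M)"
    proof (rule nn_integral_cong)
      fix w
      have "(\<Sum>r\<in>R. ennreal (rsq Y n r / F) * ennreal (exp ((zz Y n j r c w)\<^sup>2 / (4 * rsq Y n r))))
          = (\<Sum>r\<in>R. ennreal (rsq Y n r / F * exp ((zz Y n j r c w)\<^sup>2 / (4 * rsq Y n r))))"
        by (intro sum.cong refl, subst ennreal_mult) (auto simp: Fpos less_imp_le)
      also have "\<dots> = ennreal (\<Sum>r\<in>R. rsq Y n r / F * exp ((zz Y n j r c w)\<^sup>2 / (4 * rsq Y n r)))"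
        by (rule sum_ennreal) (simp add: Fpos less_imp_le)
      finally have eq: "(\<Sum>r\<in>R. ennreal (rsq Y n r / F) * ennreal (exp ((zz Y n j r c w)\<^sup>2 / (4 * rsq Y n r))))
          = ennreal (\<Sum>r\<in>R. rsq Y n r / F * exp ((zz Y n j r c w)\<^sup>2 / (4 * rsq Y n r)))" .
      show "ennreal (g w) = ennreal (exp (- t / 4)) * (\<Sum>r\<in>R. ennreal (rsq Y n r / F) * ennreal (exp ((zz Y n j r c w)\<^sup>2 / (4 * rsq Y n r))))"
        unfolding eq g_def
        by (rule ennreal_mult) (auto simp: Fpos less_imp_le sum_nonneg)
    qed
  also have "\<dots> = ennreal (exp (- t / 4)) * (\<Sum>r\<in>R. ennreal (rsq Y n r / F) * (\<integral>\<^sup>+w. ennreal (exp ((zz Y n j r c w)\<^sup>2 / (4 * rsq Y n r))) \<partial>M))"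
  proof -
    have m: "(\<lambda>w. ennreal (exp ((zz Y n j r c w)\<^sup>2 / (4 * rsq Y n r)))) \<in> borel_measurable M" for r
      using zmeas[of r] by measurable
    show ?thesis
      using m
      proof -
      have s: "(\<lambda>w. \<Sum>r\<in>R. ennreal (rsq Y n r / F) * ennreal (exp ((zz Y n j r c w)\<^sup>2 / (4 * rsq Y n r)))) \<in> borel_measurable M"
        using m by (intro borel_measurable_sum borel_measurable_times borel_measurable_const) auto
      have "(\<integral>\<^sup>+w. ennreal (exp (- t / 4)) * (\<Sum>r\<in>R. ennreal (rsq Y n r / F) * ennreal (exp ((zz Y n j r c w)\<^sup>2 / (4 * rsq Y n r)))) \<partial>M)
        = ennreal (exp (- t / 4)) * (\<integral>\<^sup>+w. (\<Sum>r\<in>R. ennreal (rsq Y n r / F) * ennreal (exp ((zz Y n j r c w)\<^sup>2 / (4 * rsq Y n r)))) \<partial>M)"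
        by (rule nn_integral_cmult[OF s])
      also have "(\<integral>\<^sup>+w. (\<Sum>r\<in>R. ennreal (rsq Y n r / F) * ennreal (exp ((zz Y n j r c w)\<^sup>2 / (4 * rsq Y n r)))) \<partial>M)
        = (\<Sum>r\<in>R. (\<integral>\<^sup>+w. ennreal (rsq Y n r / F) * ennreal (exp ((zz Y n j r c w)\<^sup>2 / (4 * rsq Y n r))) \<partial>M))"
        by (rule nn_integral_sum) (use m in auto)
      also have "\<dots> = (\<Sum>r\<in>R. ennreal (rsq Y n r / F) * (\<integral>\<^sup>+w. ennreal (exp ((zz Y n j r c w)\<^sup>2 / (4 * rsq Y n r))) \<partial>M))"
        by (rule sum.cong[OF refl], rule nn_integral_cmult[OF m])
      finally show ?thesis .
    qed
  qed
  also have "\<dots> = ennreal (exp (- t / 4)) * (\<Sum>r\<in>R. ennreal (rsq Y n r / F) * ennreal (sqrt 2))"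
    using zz_exp_int[OF J sub] unfolding M_def by (simp add: R_def)
  also have "\<dots> = ennreal (exp (- t / 4) * (\<Sum>r\<in>R. rsq Y n r / F * sqrt 2))"
    proof -
    have "(\<Sum>r\<in>R. ennreal (rsq Y n r / F) * ennreal (sqrt 2)) = (\<Sum>r\<in>R. ennreal (rsq Y n r / F * sqrt 2))"
      by (intro sum.cong refl, subst ennreal_mult) (auto simp: Fpos less_imp_le)
    also have "\<dots> = ennreal (\<Sum>r\<in>R. rsq Y n r / F * sqrt 2)"
      by (rule sum_ennreal) (simp add: Fpos less_imp_le)
    finally show ?thesis
      by (subst ennreal_mult) (auto simp: Fpos less_imp_le sum_nonneg)
  qed
  also have "(\<Sum>r\<in>R. rsq Y n r / F * sqrt 2) = sqrt 2"
    proof -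
    have "(\<Sum>r\<in>R. rsq Y n r / F * sqrt 2) = (\<Sum>r\<in>R. rsq Y n r) / F * sqrt 2"
      by (simp add: sum_divide_distrib sum_distrib_right)
    also have "\<dots> = sqrt 2" using Fpos FR by simp
    finally show ?thesis .
  qed
  finally show ?thesis by (simp add: A_def M_def F_def mult.commute)
qed



definition Jl :: "(nat \<Rightarrow> nat) \<Rightarrow> nat \<Rightarrow> (nat\<times>nat\<times>nat) set" where
  "Jl N i = {i} \<times> {..<N (i - 1)} \<times> {..<N i}"

lemma finite_Jl[simp]: "finite (Jl N i)" by (simp add: Jl_def)

lemma wi_Suc: "weight_index (Suc i) N = weight_index i N \<union> Jl N (Suc i)"
  unfolding weight_index_def Jl_def by (auto simp: le_Suc_eq)

lemma wi_0: "weight_index 0 N = {}"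
  by (auto simp: weight_index_def)

lemma finite_wi[simp]: "finite (weight_index i N)"
  by (induction i) (auto simp: wi_Suc wi_0)

lemma wi_mono: "i \<le> L \<Longrightarrow> weight_index i N \<subseteq> weight_index L N"
  by (auto simp: weight_index_def)

lemma wi_Jl_disj: "weight_index i N \<inter> Jl N (Suc i) = {}"
  by (auto simp: weight_index_def Jl_def)

lemma layer_dep:
  assumes "\<And>t. t \<in> weight_index i N \<Longrightarrow> w t = w' t" and "c < N i"
  shows "layer N X w i r c = layer N X w' i r c"
  using assms
proof (induction i arbitrary: c)
  case 0
  then show ?case by simp
next
  case (Suc i)
  have a: "\<And>t. t \<in> weight_index i N \<Longrightarrow> w t = w' t" using Suc.prems(1) by (auto simp: wi_Suc)
  have "(\<Sum>k<N i. layer N X w i r k * w (Suc i, k, c)) = (\<Sum>k<N i. layer N X w' i r k * w' (Suc i, k, c))"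
  proof (rule sum.cong[OF refl])
    fix k assume k: "k \<in> {..<N i}"
    have "(Suc i, k, c) \<in> weight_index (Suc i) N" using k Suc.prems(2) by (auto simp: weight_index_def)
    then show "layer N X w i r k * w (Suc i, k, c) = layer N X w' i r k * w' (Suc i, k, c)"
      using Suc.IH[OF a] k Suc.prems(1) by auto
  qed
  then show ?case by simp
qed

lemma layer_meas:
  assumes "weight_index i N \<subseteq> I" and "c < N i"
  shows "(\<lambda>w. layer N X w i r c) \<in> borel_measurable (PiM I (\<lambda>_::nat\<times>nat\<times>nat. GN))"
  using assms
proof (induction i arbitrary: c)
  case 0
  then show ?case by simp
next
  case (Suc i)
  have sub: "weight_index i N \<subseteq> I" using Suc.prems(1) by (auto simp: wi_Suc)
  have m1: "(\<lambda>w. layer N X w i r k) \<in> borel_measurable (PiM I (\<lambda>_. GN))" if "k < N i" for k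
    using Suc.IH[OF sub that] .
  have m2: "(\<lambda>w. w (Suc i, k, c)) \<in> borel_measurable (PiM I (\<lambda>_. GN))" if "k < N i" for k
    using that Suc.prems by (intro comp_meas) (auto simp: weight_index_def)
  have "(\<lambda>w. \<Sum>k<N i. layer N X w i r k * w (Suc i, k, c)) \<in> borel_measurable (PiM I (\<lambda>_. GN))"
    using m1 m2 by (intro borel_measurable_sum borel_measurable_times) auto
  then show ?case by simp
qed

lemma layer_Suc_zz: "layer N X w (Suc i) r c = relu (zz (layer N X w i) (N i) (Suc i) r c w)"
  by (simp add: zz_def)



lemma merge_in1: "t \<in> I \<Longrightarrow> merge I J (x, y) t = x t" by (simp add: merge_def)
lemma merge_in2: "t \<notin> I \<Longrightarrow> t \<in> J \<Longrightarrow> merge I J (x, y) t = y t" by (simp add: merge_def)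

lemma layer_merge:
  assumes sub: "weight_index i N \<subseteq> I'" and disj: "I' \<inter> Jl N (Suc i) = {}" and c: "c < N (Suc i)"
  shows "layer N X (merge I' (Jl N (Suc i)) (x, y)) (Suc i) r c = relu (zz (layer N X x i) (N i) (Suc i) r c y)"
proof -
  have "zz (layer N X (merge I' (Jl N (Suc i)) (x, y)) i) (N i) (Suc i) r c (merge I' (Jl N (Suc i)) (x, y))
      = zz (layer N X x i) (N i) (Suc i) r c y"
    unfolding zz_def
  proof (rule sum.cong[OF refl])
    fix k assume k: "k \<in> {..<N i}"
    have "layer N X (merge I' (Jl N (Suc i)) (x, y)) i r k = layer N X x i r k"
      by (rule layer_dep) (use sub k in \<open>auto simp: merge_in1\<close>)
    moreover have "(Suc i, k, c) \<in> Jl N (Suc i)" using k c by (simp add: Jl_def)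
    moreover then have "(Suc i, k, c) \<notin> I'" using disj by auto
    ultimately show "layer N X (merge I' (Jl N (Suc i)) (x, y)) i r k * merge I' (Jl N (Suc i)) (x, y) (Suc i, k, c)
        = layer N X x i r k * y (Suc i, k, c)"
      by (simp add: merge_in2)
  qed
  then show ?thesis by (simp only: layer_Suc_zz)
qed

lemma split_I:
  assumes "finite I" "weight_index (Suc i) N \<subseteq> I"
  defines "I' \<equiv> I - Jl N (Suc i)"
  shows "I = I' \<union> Jl N (Suc i)" "I' \<inter> Jl N (Suc i) = {}" "finite I'" "weight_index i N \<subseteq> I'"
  using assms wi_Jl_disj[of i N] by (auto simp: wi_Suc)

lemma exp_layer:
  assumes "finite I" "weight_index i N \<subseteq> I"
  shows "(\<integral>\<^sup>+w. ennreal (\<Sum>r<m. \<Sum>c<N i. (layer N X w i r c)\<^sup>2) \<partial>PiM I (\<lambda>_::nat\<times>nat\<times>nat. GN))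
     = ennreal ((\<Sum>r<m. \<Sum>c<N 0. (X r c)\<^sup>2) * (\<Prod>k=1..i. real (N k)) / 2 ^ i)"
  using assms
proof (induction i arbitrary: I)
  case 0
  interpret P: prob_space "PiM I (\<lambda>_::nat\<times>nat\<times>nat. GN)" by (rule prob_Om)
  show ?case by (simp add: P.emeasure_space_1)
next
  case (Suc i)
  define J where "J = Jl N (Suc i)"
  define I' where "I' = I - J"
  have IJ: "I = I' \<union> J" "I' \<inter> J = {}" "finite I'" "weight_index i N \<subseteq> I'"
    using split_I[OF Suc.prems] unfolding I'_def J_def by auto
  interpret PSF: product_sigma_finite "\<lambda>_::nat\<times>nat\<times>nat. GN" by (rule psf)
  let ?f = "\<lambda>w. ennreal (\<Sum>r<m. \<Sum>c<N (Suc i). (layer N X w (Suc i) r c)\<^sup>2)"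
  have fm: "?f \<in> borel_measurable (PiM (I' \<union> J) (\<lambda>_. GN))"
    using layer_meas[of "Suc i" N "I' \<union> J" _ X] Suc.prems IJ(1)
    by (intro measurable_compose[OF _ measurable_ennreal] borel_measurable_sum borel_measurable_power) auto
  have "(\<integral>\<^sup>+w. ?f w \<partial>PiM I (\<lambda>_. GN)) = (\<integral>\<^sup>+w. ?f w \<partial>PiM (I' \<union> J) (\<lambda>_. GN))"
    using IJ(1) by simp
  also have "\<dots> = (\<integral>\<^sup>+x. (\<integral>\<^sup>+y. ?f (merge I' J (x, y)) \<partial>PiM J (\<lambda>_. GN)) \<partial>PiM I' (\<lambda>_. GN))"
    by (rule PSF.product_nn_integral_fold[OF IJ(2,3) _ fm]) (simp add: J_def)
  also have "\<dots> = (\<integral>\<^sup>+x. ennreal (real (N (Suc i)) / 2) * ennreal (\<Sum>r<m. rsq (layer N X x i) (N i) r) \<partial>PiM I' (\<lambda>_. GN))"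
  proof (rule nn_integral_cong)
    fix x
    have "(\<integral>\<^sup>+y. ?f (merge I' J (x, y)) \<partial>PiM J (\<lambda>_. GN))
        = (\<integral>\<^sup>+y. ennreal (\<Sum>r<m. \<Sum>c<N (Suc i). (relu (zz (layer N X x i) (N i) (Suc i) r c y))\<^sup>2) \<partial>PiM J (\<lambda>_. GN))"
      unfolding J_def
      by (intro nn_integral_cong arg_cong[where f=ennreal] sum.cong refl)
         (simp del: layer.simps add: layer_merge[OF IJ(4) IJ(2)[unfolded J_def]])
    also have "\<dots> = ennreal (real (N (Suc i)) / 2 * (\<Sum>r<m. rsq (layer N X x i) (N i) r))"
      by (rule layer_sum_int) (auto simp: J_def Jl_def)
    also have "\<dots> = ennreal (real (N (Suc i)) / 2) * ennreal (\<Sum>r<m. rsq (layer N X x i) (N i) r)"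
      by (rule ennreal_mult) (auto intro: sum_nonneg)
    finally show "(\<integral>\<^sup>+y. ?f (merge I' J (x, y)) \<partial>PiM J (\<lambda>_. GN))
        = ennreal (real (N (Suc i)) / 2) * ennreal (\<Sum>r<m. rsq (layer N X x i) (N i) r)" .
  qed
  also have "\<dots> = ennreal (real (N (Suc i)) / 2) * (\<integral>\<^sup>+x. ennreal (\<Sum>r<m. rsq (layer N X x i) (N i) r) \<partial>PiM I' (\<lambda>_. GN))"
  proof (rule nn_integral_cmult)
    show "(\<lambda>x. ennreal (\<Sum>r<m. rsq (layer N X x i) (N i) r)) \<in> borel_measurable (PiM I' (\<lambda>_. GN))"
      unfolding rsq_def
      using layer_meas[of i N I' _ X] IJ(4)
      by (intro measurable_compose[OF _ measurable_ennreal] borel_measurable_sum borel_measurable_power) auto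
  qed
  also have "(\<integral>\<^sup>+x. ennreal (\<Sum>r<m. rsq (layer N X x i) (N i) r) \<partial>PiM I' (\<lambda>_. GN))
      = ennreal ((\<Sum>r<m. \<Sum>c<N 0. (X r c)\<^sup>2) * (\<Prod>k=1..i. real (N k)) / 2 ^ i)"
    unfolding rsq_def using Suc.IH[OF IJ(3,4)] by simp
  also have "ennreal (real (N (Suc i)) / 2) * ennreal ((\<Sum>r<m. \<Sum>c<N 0. (X r c)\<^sup>2) * (\<Prod>k=1..i. real (N k)) / 2 ^ i)
      = ennreal (real (N (Suc i)) / 2 * ((\<Sum>r<m. \<Sum>c<N 0. (X r c)\<^sup>2) * (\<Prod>k=1..i. real (N k)) / 2 ^ i))"
    by (rule ennreal_mult[symmetric]) (auto intro!: sum_nonneg prod_nonneg divide_nonneg_nonneg mult_nonneg_nonneg)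
  also have "real (N (Suc i)) / 2 * ((\<Sum>r<m. \<Sum>c<N 0. (X r c)\<^sup>2) * (\<Prod>k=1..i. real (N k)) / 2 ^ i)
      = (\<Sum>r<m. \<Sum>c<N 0. (X r c)\<^sup>2) * (\<Prod>k=1..Suc i. real (N k)) / 2 ^ Suc i"
    by (simp add: prod.nat_ivl_Suc')
  finally show ?case .
qed



definition bad :: "nat \<Rightarrow> (nat \<Rightarrow> nat) \<Rightarrow> (nat \<Rightarrow> nat \<Rightarrow> real) \<Rightarrow> real \<Rightarrow> nat \<Rightarrow> (nat\<times>nat\<times>nat \<Rightarrow> real) set" where
  "bad m N X t k = {w. \<exists>c<N k. t * (\<Sum>r<m. \<Sum>a<N (k - 1). (layer N X w (k - 1) r a)\<^sup>2) < (\<Sum>r<m. (layer N X w k r c)\<^sup>2)}"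

lemma merge_space:
  assumes "x \<in> space (PiM I M)" "y \<in> space (PiM J M)"
  shows "merge I J (x, y) \<in> space (PiM (I \<union> J) M)"
  using measurable_space[OF measurable_merge, of "(x, y)" I M J] assms by (simp add: space_pair_measure)

lemma bad_sets:
  assumes "weight_index (Suc i) N \<subseteq> I"
  shows "bad m N X t (Suc i) \<inter> space (PiM I (\<lambda>_::nat\<times>nat\<times>nat. GN)) \<in> sets (PiM I (\<lambda>_. GN))"
proof -
  have s: "weight_index i N \<subseteq> I" using assms by (auto simp: wi_Suc)
  have m1: "(\<lambda>w. layer N X w i r a) \<in> borel_measurable (PiM I (\<lambda>_. GN))" if "a < N i" for r a
    using layer_meas[OF s that] .
  have m2: "(\<lambda>w. layer N X w (Suc i) r c) \<in> borel_measurable (PiM I (\<lambda>_. GN))" if "c < N (Suc i)" for r c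
    using layer_meas[OF assms that] .
  have "bad m N X t (Suc i) \<inter> space (PiM I (\<lambda>_. GN)) =
     {w \<in> space (PiM I (\<lambda>_. GN)). \<exists>c\<in>{..<N (Suc i)}. t * (\<Sum>r<m. \<Sum>a<N i. (layer N X w i r a)\<^sup>2) < (\<Sum>r<m. (layer N X w (Suc i) r c)\<^sup>2)}"
    by (auto simp: bad_def)
  also have "\<dots> \<in> sets (PiM I (\<lambda>_. GN))"
    using m1 m2
    by (intro sets.sets_Collect_finite_Ex borel_measurable_less borel_measurable_sum borel_measurable_power
          borel_measurable_times borel_measurable_const) auto
  finally show ?thesis .
qed


lemma bad_bound:
  assumes fin: "finite I" and sub: "weight_index (Suc i) N \<subseteq> I"
  shows "emeasure (PiM I (\<lambda>_::nat\<times>nat\<times>nat. GN)) (bad m N X t (Suc i) \<inter> space (PiM I (\<lambda>_. GN)))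
         \<le> ennreal (real (N (Suc i)) * (sqrt 2 * exp (- t / 4)))"
proof -
  define J where "J = Jl N (Suc i)"
  define I' where "I' = I - J"
  have IJ: "I = I' \<union> J" "I' \<inter> J = {}" "finite I'" "weight_index i N \<subseteq> I'"
    using split_I[OF fin sub] unfolding I'_def J_def by auto
  interpret PSF: product_sigma_finite "\<lambda>_::nat\<times>nat\<times>nat. GN" by (rule psf)
  interpret P': prob_space "PiM I' (\<lambda>_::nat\<times>nat\<times>nat. GN)" by (rule prob_Om)
  define B where "B = bad m N X t (Suc i) \<inter> space (PiM (I' \<union> J) (\<lambda>_::nat\<times>nat\<times>nat. GN))"
  have Bs: "B \<in> sets (PiM (I' \<union> J) (\<lambda>_. GN))"
    unfolding B_def using bad_sets[of i N "I' \<union> J"] sub IJ(1) by simp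
  define K where "K = real (N (Suc i)) * (sqrt 2 * exp (- t / 4))"
  have "emeasure (PiM I (\<lambda>_. GN)) (bad m N X t (Suc i) \<inter> space (PiM I (\<lambda>_. GN)))
      = (\<integral>\<^sup>+w. indicator B w \<partial>PiM (I' \<union> J) (\<lambda>_. GN))"
    using Bs IJ(1) by (simp add: B_def)
  also have "\<dots> = (\<integral>\<^sup>+x. (\<integral>\<^sup>+y. indicator B (merge I' J (x, y)) \<partial>PiM J (\<lambda>_. GN)) \<partial>PiM I' (\<lambda>_. GN))"
    by (rule PSF.product_nn_integral_fold[OF IJ(2,3)]) (use Bs J_def in auto)
  also have "\<dots> \<le> (\<integral>\<^sup>+x. ennreal K \<partial>PiM I' (\<lambda>_. GN))"
  proof (rule nn_integral_mono)
    fix x assume x: "x \<in> space (PiM I' (\<lambda>_. GN))"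
    define A where "A = (\<lambda>c. {y \<in> space (PiM J (\<lambda>_::nat\<times>nat\<times>nat. GN)).
        t * (\<Sum>r<m. rsq (layer N X x i) (N i) r) < (\<Sum>r<m. (relu (zz (layer N X x i) (N i) (Suc i) r c y))\<^sup>2)})"
    have As: "A c \<in> sets (PiM J (\<lambda>_. GN))" if "c < N (Suc i)" for c
    proof -
      have "zz (layer N X x i) (N i) (Suc i) r c \<in> borel_measurable (PiM J (\<lambda>_. GN))" for r
        by (rule zz_meas) (use that in \<open>auto simp: J_def Jl_def\<close>)
      then show ?thesis unfolding A_def by measurable
    qed
    have lay: "layer N X (merge I' J (x, y)) i r a = layer N X x i r a" if "a < N i" for y r a
      by (rule layer_dep) (use IJ(4) that in \<open>auto simp: merge_in1\<close>)
    have eqi: "indicator B (merge I' J (x, y)) = indicator (\<Union>c\<in>{..<N (Suc i)}. A c) y"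
      if y: "y \<in> space (PiM J (\<lambda>_. GN))" for y
    proof -
      have sp: "merge I' J (x, y) \<in> space (PiM (I' \<union> J) (\<lambda>_. GN))" by (rule merge_space[OF x y])
      have lm: "\<And>r c. c < N (Suc i) \<Longrightarrow> layer N X (merge I' J (x, y)) (Suc i) r c = relu (zz (layer N X x i) (N i) (Suc i) r c y)"
        unfolding J_def by (rule layer_merge[OF IJ(4) IJ(2)[unfolded J_def]])
      have "merge I' J (x, y) \<in> B \<longleftrightarrow> y \<in> (\<Union>c\<in>{..<N (Suc i)}. A c)"
        using sp y lm
        by (auto simp: B_def bad_def A_def rsq_def lay simp del: layer.simps)
      then show ?thesis by (simp add: indicator_def)
    qed
    have "(\<integral>\<^sup>+y. indicator B (merge I' J (x, y)) \<partial>PiM J (\<lambda>_. GN))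
        = (\<integral>\<^sup>+y. indicator (\<Union>c\<in>{..<N (Suc i)}. A c) y \<partial>PiM J (\<lambda>_. GN))"
      by (rule nn_integral_cong) (simp add: eqi)
    also have "\<dots> = emeasure (PiM J (\<lambda>_. GN)) (\<Union>c\<in>{..<N (Suc i)}. A c)"
      using As by (intro nn_integral_indicator) auto
    also have "\<dots> \<le> (\<Sum>c\<in>{..<N (Suc i)}. emeasure (PiM J (\<lambda>_. GN)) (A c))"
      using As by (intro emeasure_subadditive_finite) auto
    also have "\<dots> \<le> (\<Sum>c\<in>{..<N (Suc i)}. ennreal (sqrt 2 * exp (- t / 4)))"
    proof (rule sum_mono)
      fix c assume c: "c \<in> {..<N (Suc i)}"
      show "emeasure (PiM J (\<lambda>_. GN)) (A c) \<le> ennreal (sqrt 2 * exp (- t / 4))"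
        unfolding A_def by (rule col_tail) (use c in \<open>auto simp: J_def Jl_def\<close>)
    qed
    also have "\<dots> = ennreal K" by (simp add: K_def ennreal_of_nat_eq_real_of_nat ennreal_mult)
    finally show "(\<integral>\<^sup>+y. indicator B (merge I' J (x, y)) \<partial>PiM J (\<lambda>_. GN)) \<le> ennreal K" .
  qed
  also have "\<dots> = ennreal K" by (simp add: P'.emeasure_space_1)
  finally show ?thesis by (simp add: K_def)
qed


lemma det_bound:
  fixes p :: real
  assumes p: "0 \<le> p" and N1: "\<And>k. k \<le> i \<Longrightarrow> 1 \<le> N k"
    and good: "\<And>k. 1 \<le> k \<Longrightarrow> k \<le> i \<Longrightarrow> w \<notin> bad m N X (4 * p * ln (real (N (k - 1)))) k"
  shows "k \<le> i \<Longrightarrow> (\<Sum>r<m. \<Sum>c<N k. (layer N X w k r c)\<^sup>2)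
           \<le> (4 * p) ^ k * (\<Prod>j=1..k. real (N j)) * (\<Prod>j\<in>{0..<k}. ln (real (N j))) * (\<Sum>r<m. \<Sum>c<N 0. (X r c)\<^sup>2)"
    and "1 \<le> k \<Longrightarrow> k \<le> i \<Longrightarrow> c < N k \<Longrightarrow> (\<Sum>r<m. (layer N X w k r c)\<^sup>2)
           \<le> (4 * p) ^ k * (\<Prod>j\<in>{1..<k}. real (N j)) * (\<Prod>j\<in>{0..<k}. ln (real (N j))) * (\<Sum>r<m. \<Sum>c<N 0. (X r c)\<^sup>2)"
proof -
  define F0 where "F0 = (\<Sum>r<m. \<Sum>c<N 0. (X r c)\<^sup>2)"
  define R where "R = (\<lambda>k. (4 * p) ^ k * (\<Prod>j=1..k. real (N j)) * (\<Prod>j\<in>{0..<k}. ln (real (N j))) * F0)"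
  define C where "C = (\<lambda>k. (4 * p) ^ k * (\<Prod>j\<in>{1..<k}. real (N j)) * (\<Prod>j\<in>{0..<k}. ln (real (N j))) * F0)"
  have colstep: "(\<Sum>r<m. (layer N X w (Suc j) r c)\<^sup>2) \<le> C (Suc j)"
    if j: "Suc j \<le> i" and c: "c < N (Suc j)" and fj: "(\<Sum>r<m. \<Sum>c<N j. (layer N X w j r c)\<^sup>2) \<le> R j" for j c
  proof -
    have lnN: "0 \<le> ln (real (N j))" using N1[of j] j by simp
    have "w \<notin> bad m N X (4 * p * ln (real (N j))) (Suc j)" using good[of "Suc j"] j by simp
    then have "(\<Sum>r<m. (layer N X w (Suc j) r c)\<^sup>2) \<le> 4 * p * ln (real (N j)) * (\<Sum>r<m. \<Sum>c<N j. (layer N X w j r c)\<^sup>2)"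
      using c unfolding bad_def by (simp del: layer.simps) (meson not_less)
    also have "\<dots> \<le> 4 * p * ln (real (N j)) * R j"
      using fj p lnN by (intro mult_left_mono) auto
    also have "\<dots> = C (Suc j)"
    proof -
      have e2: "(\<Prod>ja\<in>{0..<Suc j}. ln (real (N ja))) = ln (real (N j)) * (\<Prod>ja\<in>{0..<j}. ln (real (N ja)))"
        by (simp add: prod.atLeast0_lessThan_Suc)
      have e1: "{1..<Suc j} = {1..j}" by auto
      show ?thesis unfolding R_def C_def e1 e2 by (simp only: power_Suc mult_ac)
    qed
    finally show ?thesis .
  qed
  have fro: "k \<le> i \<Longrightarrow> (\<Sum>r<m. \<Sum>c<N k. (layer N X w k r c)\<^sup>2) \<le> R k" for k
  proof (induction k)
    case 0
    then show ?case by (simp add: R_def F0_def)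
  next
    case (Suc j)
    have fj: "(\<Sum>r<m. \<Sum>c<N j. (layer N X w j r c)\<^sup>2) \<le> R j" using Suc by simp
    have "(\<Sum>r<m. \<Sum>c<N (Suc j). (layer N X w (Suc j) r c)\<^sup>2) = (\<Sum>c<N (Suc j). \<Sum>r<m. (layer N X w (Suc j) r c)\<^sup>2)"
      by (rule sum.swap)
    also have "\<dots> \<le> (\<Sum>c<N (Suc j). C (Suc j))"
      by (rule sum_mono) (use colstep[OF Suc.prems _ fj] in auto)
    also have "\<dots> = R (Suc j)"
      unfolding R_def C_def
      by (simp add: atLeastLessThanSuc_atLeastAtMost prod.nat_ivl_Suc' mult_ac)
    finally show ?case .
  qed
  show "k \<le> i \<Longrightarrow> (\<Sum>r<m. \<Sum>c<N k. (layer N X w k r c)\<^sup>2)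
           \<le> (4 * p) ^ k * (\<Prod>j=1..k. real (N j)) * (\<Prod>j\<in>{0..<k}. ln (real (N j))) * (\<Sum>r<m. \<Sum>c<N 0. (X r c)\<^sup>2)"
    using fro unfolding R_def F0_def by simp
  show "1 \<le> k \<Longrightarrow> k \<le> i \<Longrightarrow> c < N k \<Longrightarrow> (\<Sum>r<m. (layer N X w k r c)\<^sup>2)
           \<le> (4 * p) ^ k * (\<Prod>j\<in>{1..<k}. real (N j)) * (\<Prod>j\<in>{0..<k}. ln (real (N j))) * (\<Sum>r<m. \<Sum>c<N 0. (X r c)\<^sup>2)"
  proof -
    assume k: "1 \<le> k" "k \<le> i" "c < N k"
    then obtain j where j: "k = Suc j" by (cases k) auto
    have "(\<Sum>r<m. (layer N X w (Suc j) r c)\<^sup>2) \<le> C (Suc j)"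
      using colstep[of j c] fro[of j] k j by simp
    then show ?thesis using j unfolding C_def F0_def by simp
  qed
qed



lemma sqrt_pow_powr: "0 < x \<Longrightarrow> sqrt (x ^ i) = x powr (real i / 2)"
proof -
  assume x: "0 < x"
  have "sqrt (x ^ i) = (x ^ i) powr (1/2)" using x by (simp add: powr_half_sqrt)
  also have "\<dots> = (x powr real i) powr (1/2)" using x by (simp add: powr_realpow)
  also have "\<dots> = x powr (real i / 2)" by (simp add: powr_powr)
  finally show ?thesis .
qed

lemma exp_bound: "2 \<le> n \<Longrightarrow> exp (- (4 * real p * ln (real n)) / 4) = 1 / real n ^ p"
proof -
  assume n: "2 \<le> n"
  have "exp (real p * ln (real n)) = real n ^ p"
    using n by (simp add: exp_of_nat_mult)
  then show ?thesis by (simp add: exp_minus field_simps)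
qed

theorem mainTheorem6:
  fixes m L :: nat and N :: "nat \<Rightarrow> nat" and X :: "nat \<Rightarrow> nat \<Rightarrow> real"
  assumes "\<And>k. k \<le> L \<Longrightarrow> N k \<ge> 3"
  shows "(\<forall>(p::nat) i. 2 \<le> p \<longrightarrow> 1 \<le> i \<longrightarrow> i \<le> L \<longrightarrow>
            measure (weight_space L N)
              {w \<in> space (weight_space L N).
                 Max ((\<lambda>j. col_norm m (layer N X w i) j) ` {..<N i})
                 \<le> (4 * real p) powr (real i / 2)
                   * sqrt (\<Prod>k\<in>{1..<i}. real (N k))
                   * sqrt (\<Prod>k\<in>{0..<i}. ln (real (N k)))
                   * frob_norm m (N 0) X}
            \<ge> 1 - (\<Sum>k=1..i. 2 * real (N k) / real (N (k - 1)) ^ p))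
       \<and> (\<forall>i. 1 \<le> i \<longrightarrow> i \<le> L \<longrightarrow>
            (\<integral>w. (frob_norm m (N i) (layer N X w i))\<^sup>2 \<partial>weight_space L N)
            \<ge> (frob_norm m (N 0) X)\<^sup>2 / (2 * pi) ^ i * (\<Prod>k=1..i. real (N k)))"
proof -
  define I where "I = weight_index L N"
  define M where "M = PiM I (\<lambda>_::nat\<times>nat\<times>nat. GN)"
  have ws: "weight_space L N = M" by (simp add: weight_space_def M_def I_def)
  interpret P: prob_space M unfolding M_def by (rule prob_Om)
  have finI: "finite I" by (simp add: I_def)
  define F0 where "F0 = (\<Sum>r<m. \<Sum>c<N 0. (X r c)\<^sup>2)"
  have F0: "0 \<le> F0" by (simp add: F0_def sum_nonneg)
  have frobX: "frob_norm m (N 0) X = sqrt F0" by (simp add: frob_norm_def F0_def)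
  have N3: "\<And>k. k \<le> L \<Longrightarrow> 3 \<le> N k" by (rule assms)
  show ?thesis
  proof (intro conjI allI impI)
    fix p :: nat and i assume p2: "2 \<le> p" and i1: "1 \<le> i" and iL: "i \<le> L"
    define t where "t = (\<lambda>k. 4 * real p * ln (real (N (k - 1))))"
    define B where "B = (\<lambda>k. bad m N X (t k) k \<inter> space M)"
    define RHS where "RHS = (4 * real p) powr (real i / 2) * sqrt (\<Prod>k\<in>{1..<i}. real (N k))
                   * sqrt (\<Prod>k\<in>{0..<i}. ln (real (N k))) * frob_norm m (N 0) X"
    define T where "T = {w \<in> space M. Max ((\<lambda>j. col_norm m (layer N X w i) j) ` {..<N i}) \<le> RHS}"
    have Bk: "B k \<in> sets M \<and> measure M (B k) \<le> 2 * real (N k) / real (N (k - 1)) ^ p" if k: "k \<in> {1..i}" for k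
    proof -
      obtain j where j: "k = Suc j" using k by (cases k) auto
      have sub: "weight_index (Suc j) N \<subseteq> I" unfolding I_def using k j iL by (intro wi_mono) auto
      have s: "B k \<in> sets M" unfolding B_def M_def j using bad_sets[OF sub] by simp
      have Nj: "2 \<le> N j" using N3[of j] k j iL by simp
      have "emeasure M (B k) \<le> ennreal (real (N (Suc j)) * (sqrt 2 * exp (- t k / 4)))"
        unfolding B_def M_def j using bad_bound[OF finI sub] by simp
      also have "exp (- t k / 4) = 1 / real (N j) ^ p" unfolding t_def j using exp_bound[OF Nj] by simp
      finally have "ennreal (measure M (B k)) \<le> ennreal (real (N (Suc j)) * (sqrt 2 * (1 / real (N j) ^ p)))"
        by (simp add: P.emeasure_eq_measure)
      then have "measure M (B k) \<le> real (N (Suc j)) * (sqrt 2 * (1 / real (N j) ^ p))"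
        by (subst (asm) ennreal_le_iff) auto
      also have "\<dots> \<le> 2 * real (N k) / real (N (k - 1)) ^ p"
      proof -
        have "sqrt 2 \<le> (2::real)" by (simp add: real_sqrt_le_iff')
        then have "real (N (Suc j)) * sqrt 2 \<le> real (N (Suc j)) * 2" by (intro mult_left_mono) auto
        then have "real (N (Suc j)) * sqrt 2 / real (N j) ^ p \<le> 2 * real (N (Suc j)) / real (N j) ^ p"
          by (intro divide_right_mono) (auto simp: mult.commute)
        then show ?thesis using j by simp
      qed
      finally show ?thesis using s by simp
    qed
    have Ts: "T \<in> sets M"
    proof -
      have wi: "weight_index i N \<subseteq> I" unfolding I_def using iL by (rule wi_mono)
      have ne: "{..<N i} \<noteq> {}"
      proof -
        have "0 < N i" using N3[of i] iL by simp
        then show ?thesis by (metis emptyE lessThan_iff)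
      qed
      have "T = {w \<in> space M. \<forall>j\<in>{..<N i}. col_norm m (layer N X w i) j \<le> RHS}"
        unfolding T_def using ne by (auto simp: Max_le_iff)
      also have "\<dots> \<in> sets M"
      proof (rule sets.sets_Collect_finite_All)
        fix j assume j: "j \<in> {..<N i}"
        have "(\<lambda>w. layer N X w i r j) \<in> borel_measurable M" for r
          unfolding M_def using layer_meas[OF wi, of j] j by simp
        then have "(\<lambda>w. col_norm m (layer N X w i) j) \<in> borel_measurable M"
          unfolding col_norm_def by measurable
        then show "{w \<in> space M. col_norm m (layer N X w i) j \<le> RHS} \<in> sets M" by measurable
      qed simp
      finally show ?thesis .
    qed
    have good: "space M - (\<Union>k\<in>{1..i}. B k) \<subseteq> T"
    proof
      fix w assume w: "w \<in> space M - (\<Union>k\<in>{1..i}. B k)"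
      have ng: "w \<notin> bad m N X (4 * real p * ln (real (N (k - 1)))) k" if "1 \<le> k" "k \<le> i" for k
        using w that by (auto simp: B_def t_def)
      have N1: "1 \<le> N k" if "k \<le> i" for k using N3[of k] that iL by simp
      have col: "(\<Sum>r<m. (layer N X w i r c)\<^sup>2)
           \<le> (4 * real p) ^ i * (\<Prod>j\<in>{1..<i}. real (N j)) * (\<Prod>j\<in>{0..<i}. ln (real (N j))) * F0"
        if c: "c < N i" for c
        using det_bound(2)[of "real p" i N w m X i c] N1 ng i1 c unfolding F0_def by auto
      have pp: "0 < 4 * real p" using p2 by simp
      have Ppos: "0 \<le> (\<Prod>j\<in>{1..<i}. real (N j))" by (simp add: prod_nonneg)
      have Lpos: "0 \<le> (\<Prod>j\<in>{0..<i}. ln (real (N j)))"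
        by (rule prod_nonneg) (use N1 in auto)
      have RHS_eq: "RHS = sqrt ((4 * real p) ^ i * (\<Prod>j\<in>{1..<i}. real (N j)) * (\<Prod>j\<in>{0..<i}. ln (real (N j))) * F0)"
        unfolding RHS_def frobX by (simp only: real_sqrt_mult sqrt_pow_powr[OF pp])
      have "col_norm m (layer N X w i) c \<le> RHS" if c: "c < N i" for c
        unfolding col_norm_def RHS_eq using col[OF c] by (rule real_sqrt_le_mono)
      moreover have ne: "{..<N i} \<noteq> {}"
      proof -
        have "0 < N i" using N3[of i] iL by simp
        then show ?thesis by (metis emptyE lessThan_iff)
      qed
      ultimately show "w \<in> T" using w unfolding T_def by (auto simp: Max_le_iff)
    qed
    have U: "(\<Union>k\<in>{1..i}. B k) \<in> sets M" using Bk by auto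
    have "1 - (\<Sum>k=1..i. 2 * real (N k) / real (N (k - 1)) ^ p) \<le> 1 - (\<Sum>k=1..i. measure M (B k))"
      using Bk by (intro diff_left_mono sum_mono) auto
    also have "\<dots> \<le> 1 - measure M (\<Union>k\<in>{1..i}. B k)"
      using Bk by (intro diff_left_mono measure_UNION_le) auto
    also have "\<dots> = measure M (space M - (\<Union>k\<in>{1..i}. B k))"
      using U by (simp add: P.prob_compl)
    also have "\<dots> \<le> measure M T"
      by (rule P.finite_measure_mono[OF good Ts])
    finally show "measure (weight_space L N)
              {w \<in> space (weight_space L N).
                 Max ((\<lambda>j. col_norm m (layer N X w i) j) ` {..<N i})
                 \<le> (4 * real p) powr (real i / 2)
                   * sqrt (\<Prod>k\<in>{1..<i}. real (N k))
                   * sqrt (\<Prod>k\<in>{0..<i}. ln (real (N k)))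
                   * frob_norm m (N 0) X}
            \<ge> 1 - (\<Sum>k=1..i. 2 * real (N k) / real (N (k - 1)) ^ p)"
      unfolding ws T_def RHS_def by simp
  next
    fix i assume i1: "1 \<le> i" and iL: "i \<le> L"
    have wi: "weight_index i N \<subseteq> I" unfolding I_def using iL by (rule wi_mono)
    define f where "f = (\<lambda>w. \<Sum>r<m. \<Sum>c<N i. (layer N X w i r c)\<^sup>2)"
    have feq: "(frob_norm m (N i) (layer N X w i))\<^sup>2 = f w" for w
      unfolding frob_norm_def f_def by (simp add: sum_nonneg)
    have fm: "f \<in> borel_measurable M"
      unfolding f_def M_def using layer_meas[OF wi]
      by (intro borel_measurable_sum borel_measurable_power) auto
    have "(\<integral>w. (frob_norm m (N i) (layer N X w i))\<^sup>2 \<partial>weight_space L N) = (\<integral>w. f w \<partial>M)"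
      by (simp add: ws feq)
    also have "\<dots> = enn2real (\<integral>\<^sup>+w. ennreal (f w) \<partial>M)"
      using fm by (intro integral_eq_nn_integral) (auto simp: f_def sum_nonneg)
    also have "(\<integral>\<^sup>+w. ennreal (f w) \<partial>M) = ennreal (F0 * (\<Prod>k=1..i. real (N k)) / 2 ^ i)"
      unfolding f_def M_def F0_def by (rule exp_layer[OF finI wi])
    also have "enn2real (ennreal (F0 * (\<Prod>k=1..i. real (N k)) / 2 ^ i)) = F0 * (\<Prod>k=1..i. real (N k)) / 2 ^ i"
      using F0 by (simp add: prod_nonneg)
    finally have E: "(\<integral>w. (frob_norm m (N i) (layer N X w i))\<^sup>2 \<partial>weight_space L N) = F0 * (\<Prod>k=1..i. real (N k)) / 2 ^ i" .
    have "(frob_norm m (N 0) X)\<^sup>2 / (2 * pi) ^ i * (\<Prod>k=1..i. real (N k)) = F0 * (\<Prod>k=1..i. real (N k)) / (2 * pi) ^ i"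
      using F0 by (simp add: frobX)
    also have "\<dots> \<le> F0 * (\<Prod>k=1..i. real (N k)) / 2 ^ i"
    proof (rule divide_left_mono)
      show "(2::real) ^ i \<le> (2 * pi) ^ i" by (rule power_mono) (use pi_gt3 in auto)
    qed (use F0 in \<open>auto intro!: mult_nonneg_nonneg prod_nonneg\<close>)
    finally show "(\<integral>w. (frob_norm m (N i) (layer N X w i))\<^sup>2 \<partial>weight_space L N)
            \<ge> (frob_norm m (N 0) X)\<^sup>2 / (2 * pi) ^ i * (\<Prod>k=1..i. real (N k))"
      using E by simp
  qed
qed



end
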